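(* Let $V$ be a quasi-regular mixed lattice vector space and $A$ a mixed lattice subspace of $V$. Then the left disjoint complement ${}^{\perp}A$ is a regular specific band in $V$. Moreover, if ${}^{\perp}A$ is an ideal, then it is a regular band.
   Context: A mixed lattice vector space is a real vector space $V$ with two partial orderings $\le$ (initial) and $\preceq$ (specific), each compatible with the vector space structure, such that for all $x,y$ the mixed lower envelope $x\curlywedge y=\max\{w: w\preceq x,\ w\le y\}$ and mixed upper envelope $x\curlyvee y=\min\{w: x\preceq w,\ y\le w\}$ exist (max/min with respect to $\le$). $V_p=\{x:0\le x\}$, $V_{sp}=\{x:0\preceq x\}$, $E_p=E\cap V_p$, $E_{sp}=E\cap V_{sp}$. $V$ is quasi-regular if $V_{sp}$ is closed under $\curlywedge,\curlyvee$. A mixed lattice subspace is a linear subspace closed under $\curlywedge,\curlyvee$; it is regular if $S=S_{sp}-S_{sp}$. An ideal (resp. specific ideal) is a mixed lattice subspace that is $(\le)$-order convex (resp. $(\preceq)$-order convex), where $U$ is $(\le)$-order convex if $x\le z\le y$, $x,y\in U$ imply $z\in U$, and analogously for $\preceq$. A set $E$ is $(\le)$-order closed if $\sup C\in E$ for every nonempty $(\le)$-upwards-directed $C\subseteq E$ whose $\le$-supremum exists in $V$, and $\inf C\in E$ for every nonempty $(\le)$-downwards-directed $C\subseteq E$ whose $\le$-infimum exists in $V$; $(\preceq)$-order closed is defined the same way using $\preceq$-directedness and $\preceq$-suprema/infima. A band is a $(\le)$-order closed ideal; a specific band is a $(\preceq)$-order closed specific ideal. The left disjoint complement ${}^{\perp}A$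 of a mixed lattice subspace $A$ is the smallest specific ideal containing the set $\{x\in V_{sp}: x\curlywedge z=0 \text{ for all } z\in A_p\}$. *)

theory Defs
  imports Complex_Main
begin

text \<open>A real vector space V (the type 'a) carries two relations: le (the initial
  order \<le>) and sle (the specific order \<preceq>).\<close>

definition vs_partial_order :: "('a::real_vector \<Rightarrow> 'a \<Rightarrow> bool) \<Rightarrow> bool" where
  "vs_partial_order R \<longleftrightarrow>
     (\<forall>x. R x x) \<and>
     (\<forall>x y. R x y \<and> R y x \<longrightarrow> x = y) \<and>
     (\<forall>x y z. R x y \<and> R y z \<longrightarrow> R x z) \<and>
     (\<forall>x y z. R x y \<longrightarrow> R (x + z) (y + z)) \<and>
     (\<forall>x (c::real). R 0 x \<and> 0 \<le> c \<longrightarrow> R 0 (c *\<^sub>R x))"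

definition is_greatest_wrt :: "('a \<Rightarrow> 'a \<Rightarrow> bool) \<Rightarrow> 'a set \<Rightarrow> 'a \<Rightarrow> bool" where
  "is_greatest_wrt R S m \<longleftrightarrow> m \<in> S \<and> (\<forall>w\<in>S. R w m)"

definition is_least_wrt :: "('a \<Rightarrow> 'a \<Rightarrow> bool) \<Rightarrow> 'a set \<Rightarrow> 'a \<Rightarrow> bool" where
  "is_least_wrt R S m \<longleftrightarrow> m \<in> S \<and> (\<forall>w\<in>S. R m w)"

definition mlow :: "('a \<Rightarrow> 'a \<Rightarrow> bool) \<Rightarrow> ('a \<Rightarrow> 'a \<Rightarrow> bool) \<Rightarrow> 'a \<Rightarrow> 'a \<Rightarrow> 'a" where
  "mlow le sle x y = (THE m. is_greatest_wrt le {w. sle w x \<and> le w y} m)"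

definition mup :: "('a \<Rightarrow> 'a \<Rightarrow> bool) \<Rightarrow> ('a \<Rightarrow> 'a \<Rightarrow> bool) \<Rightarrow> 'a \<Rightarrow> 'a \<Rightarrow> 'a" where
  "mup le sle x y = (THE m. is_least_wrt le {w. sle x w \<and> le y w} m)"

definition mixed_lattice_vs ::
  "('a::real_vector \<Rightarrow> 'a \<Rightarrow> bool) \<Rightarrow> ('a \<Rightarrow> 'a \<Rightarrow> bool) \<Rightarrow> bool" where
  "mixed_lattice_vs le sle \<longleftrightarrow>
     vs_partial_order le \<and> vs_partial_order sle \<and>
     (\<forall>x y. \<exists>m. is_greatest_wrt le {w. sle w x \<and> le w y} m) \<and>
     (\<forall>x y. \<exists>m. is_least_wrt le {w. sle x w \<and> le y w} m)"

definition quasi_regular ::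
  "('a::real_vector \<Rightarrow> 'a \<Rightarrow> bool) \<Rightarrow> ('a \<Rightarrow> 'a \<Rightarrow> bool) \<Rightarrow> bool" where
  "quasi_regular le sle \<longleftrightarrow>
     (\<forall>x y. sle 0 x \<and> sle 0 y \<longrightarrow> sle 0 (mlow le sle x y) \<and> sle 0 (mup le sle x y))"

definition mixed_lattice_subspace ::
  "('a::real_vector \<Rightarrow> 'a \<Rightarrow> bool) \<Rightarrow> ('a \<Rightarrow> 'a \<Rightarrow> bool) \<Rightarrow> 'a set \<Rightarrow> bool" where
  "mixed_lattice_subspace le sle S \<longleftrightarrow>
     subspace S \<and>
     (\<forall>x\<in>S. \<forall>y\<in>S. mlow le sle x y \<in> S \<and> mup le sle x y \<in> S)"

definition regular_subspace ::
  "('a::real_vector \<Rightarrow> 'a \<Rightarrow> bool) \<Rightarrow> 'a set \<Rightarrow> bool" where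
  "regular_subspace sle S \<longleftrightarrow>
     S = {x - y | x y. x \<in> S \<and> sle 0 x \<and> y \<in> S \<and> sle 0 y}"

definition order_convex :: "('a \<Rightarrow> 'a \<Rightarrow> bool) \<Rightarrow> 'a set \<Rightarrow> bool" where
  "order_convex R U \<longleftrightarrow> (\<forall>x y z. x \<in> U \<and> y \<in> U \<and> R x z \<and> R z y \<longrightarrow> z \<in> U)"

definition ideal_ml ::
  "('a::real_vector \<Rightarrow> 'a \<Rightarrow> bool) \<Rightarrow> ('a \<Rightarrow> 'a \<Rightarrow> bool) \<Rightarrow> 'a set \<Rightarrow> bool" where
  "ideal_ml le sle U \<longleftrightarrow> mixed_lattice_subspace le sle U \<and> order_convex le U"

definition specific_ideal ::
  "('a::real_vector \<Rightarrow> 'a \<Rightarrow> bool) \<Rightarrow> ('a \<Rightarrow> 'a \<Rightarrow> bool) \<Rightarrow> 'a set \<Rightarrow> bool" where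
  "specific_ideal le sle U \<longleftrightarrow> mixed_lattice_subspace le sle U \<and> order_convex sle U"

definition order_closed :: "('a \<Rightarrow> 'a \<Rightarrow> bool) \<Rightarrow> 'a set \<Rightarrow> bool" where
  "order_closed R E \<longleftrightarrow>
     (\<forall>C s. C \<noteq> {} \<and> C \<subseteq> E \<and> (\<forall>a\<in>C. \<forall>b\<in>C. \<exists>c\<in>C. R a c \<and> R b c) \<and>
            is_least_wrt R {u. \<forall>c\<in>C. R c u} s \<longrightarrow> s \<in> E) \<and>
     (\<forall>C s. C \<noteq> {} \<and> C \<subseteq> E \<and> (\<forall>a\<in>C. \<forall>b\<in>C. \<exists>c\<in>C. R c a \<and> R c b) \<and>
            is_greatest_wrt R {l. \<forall>c\<in>C. R l c} s \<longrightarrow> s \<in> E)"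

definition band ::
  "('a::real_vector \<Rightarrow> 'a \<Rightarrow> bool) \<Rightarrow> ('a \<Rightarrow> 'a \<Rightarrow> bool) \<Rightarrow> 'a set \<Rightarrow> bool" where
  "band le sle B \<longleftrightarrow> ideal_ml le sle B \<and> order_closed le B"

definition specific_band ::
  "('a::real_vector \<Rightarrow> 'a \<Rightarrow> bool) \<Rightarrow> ('a \<Rightarrow> 'a \<Rightarrow> bool) \<Rightarrow> 'a set \<Rightarrow> bool" where
  "specific_band le sle B \<longleftrightarrow> specific_ideal le sle B \<and> order_closed sle B"

definition left_disjoint_complement ::
  "('a::real_vector \<Rightarrow> 'a \<Rightarrow> bool) \<Rightarrow> ('a \<Rightarrow> 'a \<Rightarrow> bool) \<Rightarrow> 'a set \<Rightarrow> 'a set" where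
  "left_disjoint_complement le sle A =
     \<Inter>{I. specific_ideal le sle I \<and>
           {x. sle 0 x \<and> (\<forall>z\<in>A. le 0 z \<longrightarrow> mlow le sle x z = 0)} \<subseteq> I}"

end

theory Submission
  imports Defs
begin

lemma vpo_refl: "vs_partial_order R \<Longrightarrow> R x x"
  unfolding vs_partial_order_def by blast
lemma vpo_antisym: "vs_partial_order R \<Longrightarrow> R x y \<Longrightarrow> R y x \<Longrightarrow> x = y"
  unfolding vs_partial_order_def by blast
lemma vpo_trans: "vs_partial_order R \<Longrightarrow> R x y \<Longrightarrow> R y z \<Longrightarrow> R x z"
  unfolding vs_partial_order_def by blast
lemma vpo_add: "vs_partial_order R \<Longrightarrow> R x y \<Longrightarrow> R (x + z) (y + z)"
  unfolding vs_partial_order_def by blast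
lemma vpo_scale0: "vs_partial_order R \<Longrightarrow> R 0 x \<Longrightarrow> 0 \<le> c \<Longrightarrow> R 0 (c *\<^sub>R x)"
  unfolding vs_partial_order_def by blast

lemma vpo_diff:
  assumes "vs_partial_order R" shows "R x y \<longleftrightarrow> R 0 (y - x)"
proof
  assume "R x y" then have "R (x + - x) (y + - x)" by (rule vpo_add[OF assms])
  then show "R 0 (y - x)" by simp
next
  assume "R 0 (y - x)" then have "R (0 + x) (y - x + x)" by (rule vpo_add[OF assms])
  then show "R x y" by simp
qed

lemma vpo_add2:
  assumes "vs_partial_order R" "R a b" "R c d" shows "R (a + c) (b + d)"
proof -
  have 1: "R (a + c) (b + c)" using vpo_add[OF assms(1,2)] .
  have "R (c + b) (d + b)" using vpo_add[OF assms(1,3)] .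
  then have 2: "R (b + c) (b + d)" by (simp add: add.commute)
  show ?thesis using vpo_trans[OF assms(1) 1 2] .
qed

lemma vpo_scale:
  assumes "vs_partial_order R" "R x y" "0 \<le> c" shows "R (c *\<^sub>R x) (c *\<^sub>R y)"
proof -
  have "R 0 (y - x)" using assms(2) vpo_diff[OF assms(1)] by simp
  then have "R 0 (c *\<^sub>R (y - x))" using vpo_scale0[OF assms(1) _ assms(3)] by simp
  then have "R (0 + c *\<^sub>R x) (c *\<^sub>R (y - x) + c *\<^sub>R x)" by (rule vpo_add[OF assms(1)])
  then show ?thesis by (simp add: algebra_simps)
qed

lemma vpo_neg:
  assumes "vs_partial_order R" "R x y" shows "R (- y) (- x)"
proof -
  have "R (x + (- x - y)) (y + (- x - y))" using vpo_add[OF assms] .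
  then show ?thesis by (simp add: algebra_simps)
qed

lemma vpo_down_from_up:
  assumes R: "vs_partial_order R" and neg: "\<And>x. x \<in> E \<Longrightarrow> - x \<in> E"
    and up: "\<And>C s. C \<noteq> {} \<Longrightarrow> C \<subseteq> E \<Longrightarrow> (\<forall>a\<in>C. \<forall>b\<in>C. \<exists>c\<in>C. R a c \<and> R b c) \<Longrightarrow>
            is_least_wrt R {u. \<forall>c\<in>C. R c u} s \<Longrightarrow> s \<in> E"
    and C: "C \<noteq> {}" "C \<subseteq> E" "\<forall>a\<in>C. \<forall>b\<in>C. \<exists>c\<in>C. R c a \<and> R c b"
    and s: "is_greatest_wrt R {l. \<forall>c\<in>C. R l c} s"
  shows "s \<in> E"
proof -
  let ?C = "uminus ` C"
  have "?C \<noteq> {}" using C by auto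
  moreover have "?C \<subseteq> E" using C neg by auto
  moreover have "\<forall>a\<in>?C. \<forall>b\<in>?C. \<exists>c\<in>?C. R a c \<and> R b c"
  proof (intro ballI)
    fix a b assume "a \<in> ?C" "b \<in> ?C"
    then obtain a' b' where "a' \<in> C" "b' \<in> C" "a = - a'" "b = - b'" by auto
    then obtain c where "c \<in> C" "R c a'" "R c b'" using C by blast
    then have "R (- a') (- c)" "R (- b') (- c)" using vpo_neg[OF R, of c a'] vpo_neg[OF R, of c b'] by simp_all
    then show "\<exists>c\<in>?C. R a c \<and> R b c" using \<open>c \<in> C\<close> \<open>a = - a'\<close> \<open>b = - b'\<close> by blast
  qed
  moreover have "is_least_wrt R {u. \<forall>c\<in>?C. R c u} (- s)"
    unfolding is_least_wrt_def
  proof (intro conjI ballI)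
    have "\<forall>c\<in>C. R s c" using s unfolding is_greatest_wrt_def by auto
    then show "- s \<in> {u. \<forall>c\<in>?C. R c u}" using vpo_neg[OF R, of s] by auto
  next
    fix w assume w: "w \<in> {u. \<forall>c\<in>?C. R c u}"
    have "- w \<in> {l. \<forall>c\<in>C. R l c}"
    proof (simp, intro ballI)
      fix c assume "c \<in> C" then have "R (- c) w" using w by auto
      from vpo_neg[OF R this] show "R (- w) c" by simp
    qed
    then have "R (- w) s" using s unfolding is_greatest_wrt_def by blast
    from vpo_neg[OF R this] show "R (- s) w" by simp
  qed
  ultimately have "- s \<in> E" by (rule up)
  from neg[OF this] show ?thesis by simp
qed

locale mls =
  fixes le sle :: "'a::real_vector \<Rightarrow> 'a \<Rightarrow> bool" and A :: "'a set"
  assumes ml: "mixed_lattice_vs le sle" and qr: "quasi_regular le sle"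
    and As: "mixed_lattice_subspace le sle A"
begin

lemma le_po: "vs_partial_order le" and sle_po: "vs_partial_order sle"
  using ml unfolding mixed_lattice_vs_def by auto

lemma A_sub: "subspace A" using As unfolding mixed_lattice_subspace_def by auto

definition pi :: "'a \<Rightarrow> 'a" where "pi v = mup le sle 0 v"

lemma least_unique: "is_least_wrt le S m \<Longrightarrow> is_least_wrt le S m' \<Longrightarrow> m = m'"
  unfolding is_least_wrt_def using vpo_antisym[OF le_po] by blast
lemma greatest_unique: "is_greatest_wrt le S m \<Longrightarrow> is_greatest_wrt le S m' \<Longrightarrow> m = m'"
  unfolding is_greatest_wrt_def using vpo_antisym[OF le_po] by blast

lemma least_the: assumes "is_least_wrt le S m" shows "(THE m. is_least_wrt le S m) = m"
proof (rule the_equality)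
  show "is_least_wrt le S m" by fact
  fix x assume "is_least_wrt le S x" then show "x = m" using least_unique[OF _ assms] by blast
qed
lemma greatest_the: assumes "is_greatest_wrt le S m" shows "(THE m. is_greatest_wrt le S m) = m"
proof (rule the_equality)
  show "is_greatest_wrt le S m" by fact
  fix x assume "is_greatest_wrt le S x" then show "x = m" using greatest_unique[OF _ assms] by blast
qed

lemma pi_least_wrt: "is_least_wrt le {w. sle 0 w \<and> le v w} (pi v)"
proof -
  obtain m where m: "is_least_wrt le {w. sle 0 w \<and> le v w} m"
    using ml unfolding mixed_lattice_vs_def by blast
  have "pi v = m" unfolding pi_def mup_def using least_the[OF m] by simp
  then show ?thesis using m by simp
qed

lemma pi_K: "sle 0 (pi v)" and pi_ge: "le v (pi v)"
  and pi_least: "sle 0 k \<Longrightarrow> le v k \<Longrightarrow> le (pi v) k"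
  using pi_least_wrt unfolding is_least_wrt_def by auto

lemma le_shift: "le a b \<Longrightarrow> a + c = a' \<Longrightarrow> b + c = b' \<Longrightarrow> le a' b'"
  using vpo_add[OF le_po, of a b c] by simp
lemma sle_shift: "sle a b \<Longrightarrow> a + c = a' \<Longrightarrow> b + c = b' \<Longrightarrow> sle a' b'"
  using vpo_add[OF sle_po, of a b c] by simp

lemma mup_eq: "mup le sle x y = x + pi (y - x)"
proof -
  have m: "is_least_wrt le {w. sle x w \<and> le y w} (x + pi (y - x))"
    unfolding is_least_wrt_def
  proof (intro conjI ballI)
    have "sle x (x + pi (y - x))" by (rule sle_shift[OF pi_K[of "y - x"], where c=x]) (simp_all add: algebra_simps)
    moreover have "le y (x + pi (y - x))" by (rule le_shift[OF pi_ge[of "y - x"], where c=x]) (simp_all add: algebra_simps)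
    ultimately show "x + pi (y - x) \<in> {w. sle x w \<and> le y w}" by simp
  next
    fix w assume w: "w \<in> {w. sle x w \<and> le y w}"
    have "sle 0 (w - x)" by (rule sle_shift[of x w "- x"]) (use w in simp_all)
    moreover have "le (y - x) (w - x)" by (rule le_shift[of y w "- x"]) (use w in simp_all)
    ultimately have "le (pi (y - x)) (w - x)" using pi_least by blast
    then show "le (x + pi (y - x)) w" by (rule le_shift[of _ _ x]) (simp_all add: algebra_simps)
  qed
  show ?thesis unfolding mup_def using least_the[OF m] .
qed

lemma mlow_eq: "mlow le sle x y = x - pi (x - y)"
proof -
  have m: "is_greatest_wrt le {w. sle w x \<and> le w y} (x - pi (x - y))"
    unfolding is_greatest_wrt_def
  proof (intro conjI ballI)
    have "sle (x - pi (x - y)) x" by (rule sle_shift[OF pi_K[of "x - y"], where c="x - pi (x - y)"]) (simp_all add: algebra_simps)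
    moreover have "le (x - pi (x - y)) y" by (rule le_shift[OF pi_ge[of "x - y"], where c="y - pi (x - y)"]) (simp_all add: algebra_simps)
    ultimately show "x - pi (x - y) \<in> {w. sle w x \<and> le w y}" by simp
  next
    fix w assume w: "w \<in> {w. sle w x \<and> le w y}"
    have "sle 0 (x - w)" by (rule sle_shift[of w x "- w"]) (use w in simp_all)
    moreover have "le (x - y) (x - w)" by (rule le_shift[of w y "x - y - w"]) (use w in simp_all)
    ultimately have "le (pi (x - y)) (x - w)" using pi_least by blast
    then show "le w (x - pi (x - y))" by (rule le_shift[of _ _ "w - pi (x - y)"]) (simp_all add: algebra_simps)
  qed
  show ?thesis unfolding mlow_def using greatest_the[OF m] .
qed


lemma pi_mono: assumes "le v w" shows "le (pi v) (pi w)"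
  using pi_least[OF pi_K[of w] vpo_trans[OF le_po assms pi_ge[of w]]] .

lemma pi_id: assumes "sle 0 k" shows "pi k = k"
proof -
  have "le (pi k) k" using pi_least[OF assms vpo_refl[OF le_po]] .
  then show ?thesis using vpo_antisym[OF le_po _ pi_ge[of k]] by blast
qed

lemma K_add: "sle 0 a \<Longrightarrow> sle 0 b \<Longrightarrow> sle 0 (a + b)"
  using vpo_add2[OF sle_po, of 0 a 0 b] by simp

lemma sle_iff: "sle x y \<longleftrightarrow> sle 0 (y - x)" using vpo_diff[OF sle_po] .
lemma le_iff: "le x y \<longleftrightarrow> le 0 (y - x)" using vpo_diff[OF le_po] .

lemma quasi: assumes "sle 0 a" "sle 0 b" shows "sle 0 (a - pi (a - b))"
proof -
  have "sle 0 (mlow le sle a b)" using qr assms unfolding quasi_regular_def by blast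
  then show ?thesis by (simp add: mlow_eq)
qed

lemma sle_le0: assumes "sle 0 k" shows "le 0 k"
proof -
  have "sle 0 (0 - pi (0 - k))" using quasi[OF vpo_refl[OF sle_po] assms] .
  then have "sle (pi (- k)) 0" using sle_iff[of "pi (- k)" 0] by simp
  then have "pi (- k) = 0" using vpo_antisym[OF sle_po _ pi_K[of "- k"]] by blast
  then have "le (- k) 0" using pi_ge[of "- k"] by simp
  then show ?thesis using le_iff[of "- k" 0] by simp
qed

lemma sle_le: assumes "sle x y" shows "le x y"
  using sle_le0[of "y - x"] assms sle_iff[of x y] le_iff[of x y] by blast

lemma pi_nonneg: "le 0 (pi v)" using sle_le0[OF pi_K] .

lemma pi_homog: assumes c: "0 < c" shows "pi (c *\<^sub>R v) = c *\<^sub>R pi v"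
proof -
  have 1: "le (pi (c *\<^sub>R v)) (c *\<^sub>R pi v)"
    using pi_least[OF vpo_scale0[OF sle_po pi_K[of v], of c] vpo_scale[OF le_po pi_ge[of v], of c]] c by simp
  have "le ((1/c) *\<^sub>R (c *\<^sub>R v)) ((1/c) *\<^sub>R pi (c *\<^sub>R v))"
    using vpo_scale[OF le_po pi_ge[of "c *\<^sub>R v"], of "1/c"] c by simp
  then have "le v ((1/c) *\<^sub>R pi (c *\<^sub>R v))" using c by simp
  then have X: "le (pi v) ((1/c) *\<^sub>R pi (c *\<^sub>R v))"
    using pi_least[OF vpo_scale0[OF sle_po pi_K[of "c *\<^sub>R v"], of "1/c"]] c by simp
  have "le (c *\<^sub>R pi v) (c *\<^sub>R ((1/c) *\<^sub>R pi (c *\<^sub>R v)))"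
    by (rule vpo_scale[OF le_po X]) (use c in simp)
  then have 2: "le (c *\<^sub>R pi v) (pi (c *\<^sub>R v))" using c by simp
  show ?thesis using vpo_antisym[OF le_po 1 2] .
qed

definition Dset :: "'a set" where
  "Dset = {x. sle 0 x \<and> (\<forall>z\<in>A. le 0 z \<longrightarrow> pi (x - z) = x)}"

lemma Dset_eq: "{x. sle 0 x \<and> (\<forall>z\<in>A. le 0 z \<longrightarrow> mlow le sle x z = 0)} = Dset"
proof -
  have e: "\<And>x z. (x - pi (x - z) = 0) = (pi (x - z) = x)" by auto
  show ?thesis unfolding Dset_def mlow_eq e ..
qed

lemma D_K: "x \<in> Dset \<Longrightarrow> sle 0 x" unfolding Dset_def by simp
lemma D_pi: "x \<in> Dset \<Longrightarrow> z \<in> A \<Longrightarrow> le 0 z \<Longrightarrow> pi (x - z) = x" unfolding Dset_def by simp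

lemma le_sub: assumes "le 0 z" shows "le (x - z) x"
  by (rule le_shift[OF assms, where c="x - z"]) simp_all

lemma D_le_pi: assumes "le 0 z" "sle 0 x" shows "le (pi (x - z)) x"
  using pi_mono[OF le_sub[OF assms(1), of x]] pi_id[OF assms(2)] by simp

lemma D_her: assumes p: "sle 0 p" and pd: "sle p d" and d: "d \<in> Dset" shows "p \<in> Dset"
  unfolding Dset_def
proof (intro CollectI conjI ballI impI)
  show "sle 0 p" by fact
  fix z assume z: "z \<in> A" "le 0 z"
  have k: "sle 0 (pi (p - z) + (d - p))" using K_add[OF pi_K[of "p - z"], of "d - p"] pd sle_iff[of p d] by simp
  have "le (d - z) (pi (p - z) + (d - p))"
    by (rule le_shift[OF pi_ge[of "p - z"], where c="d - p"]) (simp_all add: algebra_simps)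
  then have "le (pi (d - z)) (pi (p - z) + (d - p))" using pi_least[OF k] by blast
  then have "le d (pi (p - z) + (d - p))" using D_pi[OF d z] by simp
  then have 1: "le p (pi (p - z))"
    by (rule le_shift[where c="p - d"]) (simp_all add: algebra_simps)
  show "pi (p - z) = p" using vpo_antisym[OF le_po D_le_pi[OF z(2) p] 1] .
qed

lemma G: assumes a: "a \<in> Dset" and e: "sle 0 e" and z: "z \<in> A" "le 0 z"
  shows "sle a (pi (a + e - z))"
proof -
  define q where "q = pi (a + e - z)"
  have aK: "sle 0 a" using D_K[OF a] .
  have ae: "sle 0 (a + e)" using K_add[OF aK e] .
  have h1: "le q (a + e)" unfolding q_def using D_le_pi[OF z(2) ae] by simp
  have h1': "le (q - e) a" by (rule le_shift[OF h1, where c="- e"]) simp_all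
  have h2: "le (a - z) (q - e)"
    by (rule le_shift[OF pi_ge[of "a + e - z"], where c="- e"]) (simp_all add: q_def algebra_simps)
  have "le (pi (q - e)) a" using pi_least[OF aK h1'] .
  moreover have "le a (pi (q - e))" using pi_mono[OF h2] D_pi[OF a z] by simp
  ultimately have "pi (q - e) = a" using vpo_antisym[OF le_po] by blast
  moreover have "sle 0 (q - pi (q - e))" using quasi[OF pi_K e] unfolding q_def .
  ultimately have "sle 0 (q - a)" by simp
  then show ?thesis using sle_iff[of a q] q_def by blast
qed

lemma D_add: assumes a: "a \<in> Dset" and b: "b \<in> Dset" shows "a + b \<in> Dset"
  unfolding Dset_def
proof (intro CollectI conjI ballI impI)
  show "sle 0 (a + b)" using K_add[OF D_K[OF a] D_K[OF b]] .
  fix z assume z: "z \<in> A" "le 0 z"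
  define q where "q = pi (a + b - z)"
  have "sle a q" using G[OF a D_K[OF b] z] q_def by simp
  then have qa: "sle 0 (q - a)" using sle_iff[of a q] by blast
  have "le (b - z) (q - a)"
    by (rule le_shift[OF pi_ge[of "a + b - z"], where c="- a"]) (simp_all add: q_def algebra_simps)
  then have "le (pi (b - z)) (q - a)" using pi_least[OF qa] by blast
  then have "le b (q - a)" using D_pi[OF b z] by simp
  then have 1: "le (a + b) q" by (rule le_shift[where c=a]) (simp_all add: algebra_simps)
  have 2: "le q (a + b)" unfolding q_def using D_le_pi[OF z(2) K_add[OF D_K[OF a] D_K[OF b]]] .
  show "pi (a + b - z) = a + b" using vpo_antisym[OF le_po 2 1] q_def by simp
qed

lemma D_zero: "0 \<in> Dset"
  unfolding Dset_def
proof (intro CollectI conjI ballI impI)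
  show "sle 0 0" using vpo_refl[OF sle_po] .
  fix z assume z: "z \<in> A" "le 0 z"
  have "le (- z) 0" using vpo_neg[OF le_po z(2)] by simp
  then have "le (pi (0 - z)) 0" using pi_least[OF vpo_refl[OF sle_po]] by simp
  then show "pi (0 - z) = 0" using vpo_antisym[OF le_po _ pi_nonneg] by blast
qed

lemma D_scale: assumes a: "a \<in> Dset" and c: "0 \<le> c" shows "c *\<^sub>R a \<in> Dset"
proof (cases "c = 0")
  case True then show ?thesis using D_zero by simp
next
  case False
  then have c: "0 < c" using c by simp
  show ?thesis unfolding Dset_def
  proof (intro CollectI conjI ballI impI)
    show "sle 0 (c *\<^sub>R a)" using vpo_scale0[OF sle_po D_K[OF a]] c by simp
    fix z assume z: "z \<in> A" "le 0 z"
    have z': "(1/c) *\<^sub>R z \<in> A" using A_sub z(1) unfolding subspace_def by blast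
    have z'': "le 0 ((1/c) *\<^sub>R z)" using vpo_scale0[OF le_po z(2)] c by simp
    have "c *\<^sub>R a - z = c *\<^sub>R (a - (1/c) *\<^sub>R z)" using c by (simp add: algebra_simps)
    then have "pi (c *\<^sub>R a - z) = c *\<^sub>R pi (a - (1/c) *\<^sub>R z)" using pi_homog[OF c] by simp
    then show "pi (c *\<^sub>R a - z) = c *\<^sub>R a" using D_pi[OF a z' z''] by simp
  qed
qed

lemma KL: assumes a: "a \<in> Dset" and b: "b \<in> Dset" shows "pi (a - b) \<in> Dset"
proof -
  have "sle 0 (a - pi (a - b))" using quasi[OF D_K[OF a] D_K[OF b]] .
  then have "sle (pi (a - b)) a" using sle_iff[of "pi (a - b)" a] by blast
  then show ?thesis using D_her[OF pi_K _ a] by blast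
qed

definition Mset :: "'a set" where
  "Mset = {a - b | a b. a \<in> Dset \<and> b \<in> Dset}"

lemma M_intro: "a \<in> Dset \<Longrightarrow> b \<in> Dset \<Longrightarrow> x = a - b \<Longrightarrow> x \<in> Mset"
  unfolding Mset_def by blast

lemma D_M: "d \<in> Dset \<Longrightarrow> d \<in> Mset"
  using M_intro[OF _ D_zero, of d d] by simp

lemma M_sub: "subspace Mset"
  unfolding subspace_def
proof (intro conjI ballI allI)
  show "0 \<in> Mset" using D_M[OF D_zero] .
next
  fix x y assume "x \<in> Mset" "y \<in> Mset"
  then obtain a b c d where "a \<in> Dset" "b \<in> Dset" "c \<in> Dset" "d \<in> Dset" "x = a - b" "y = c - d"
    unfolding Mset_def by blast
  then have "x + y = (a + c) - (b + d)" by (simp add: algebra_simps)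
  then show "x + y \<in> Mset" using M_intro D_add \<open>a \<in> Dset\<close> \<open>b \<in> Dset\<close> \<open>c \<in> Dset\<close> \<open>d \<in> Dset\<close> by metis
next
  fix c :: real and x assume "x \<in> Mset"
  then obtain a b where ab: "a \<in> Dset" "b \<in> Dset" "x = a - b" unfolding Mset_def by blast
  show "c *\<^sub>R x \<in> Mset"
  proof (cases "0 \<le> c")
    case True
    have "c *\<^sub>R x = c *\<^sub>R a - c *\<^sub>R b" unfolding ab(3) by (rule scaleR_diff_right)
    then show ?thesis using M_intro[OF D_scale[OF ab(1) True] D_scale[OF ab(2) True]] by blast
  next
    case False
    then have c: "0 \<le> - c" by simp
    have "c *\<^sub>R x = (- c) *\<^sub>R b - (- c) *\<^sub>R a" unfolding ab(3) by (simp add: algebra_simps)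
    then show ?thesis using M_intro[OF D_scale[OF ab(2) c] D_scale[OF ab(1) c]] by blast
  qed
qed

lemma M_add: "x \<in> Mset \<Longrightarrow> y \<in> Mset \<Longrightarrow> x + y \<in> Mset"
  using M_sub unfolding subspace_def by blast
lemma M_scale: "x \<in> Mset \<Longrightarrow> c *\<^sub>R x \<in> Mset"
  using M_sub unfolding subspace_def by blast
lemma M_neg: "x \<in> Mset \<Longrightarrow> - x \<in> Mset"
  using M_scale[of x "-1"] by simp
lemma M_diff: "x \<in> Mset \<Longrightarrow> y \<in> Mset \<Longrightarrow> x - y \<in> Mset"
  using M_add[OF _ M_neg[of y], of x] by simp

lemma M_pi: assumes "x \<in> Mset" shows "pi x \<in> Dset"
  using assms KL unfolding Mset_def by blast

lemma M_K: assumes x: "x \<in> Mset" "sle 0 x" shows "x \<in> Dset"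
proof -
  obtain a b where ab: "a \<in> Dset" "b \<in> Dset" "x = a - b" using x(1) unfolding Mset_def by blast
  have "sle x a" using sle_iff[of "a - b" a] D_K[OF ab(2)] ab(3) by simp
  then show ?thesis using D_her[OF x(2) _ ab(1)] by blast
qed

lemma M_mls: "mixed_lattice_subspace le sle Mset"
  unfolding mixed_lattice_subspace_def
proof (intro conjI ballI)
  show "subspace Mset" by (rule M_sub)
next
  fix x y assume xy: "x \<in> Mset" "y \<in> Mset"
  show "mlow le sle x y \<in> Mset" unfolding mlow_eq
    using M_diff[OF xy(1) D_M[OF M_pi[OF M_diff[OF xy]]]] .
  show "mup le sle x y \<in> Mset" unfolding mup_eq
    using M_add[OF xy(1) D_M[OF M_pi[OF M_diff[OF xy(2,1)]]]] .
qed

lemma M_convex: "order_convex sle Mset"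
  unfolding order_convex_def
proof (intro allI impI)
  fix x y w assume h: "x \<in> Mset \<and> y \<in> Mset \<and> sle x w \<and> sle w y"
  obtain a b where ab: "a \<in> Dset" "b \<in> Dset" "x = a - b" using h unfolding Mset_def by blast
  obtain c d where cd: "c \<in> Dset" "d \<in> Dset" "y = c - d" using h unfolding Mset_def by blast
  have p: "sle 0 (w - x)" using h sle_iff[of x w] by blast
  have yw: "sle 0 (y - w)" using h sle_iff[of w y] by blast
  have "sle 0 ((y - w) + d + a)" using K_add[OF K_add[OF yw D_K[OF cd(2)]] D_K[OF ab(1)]] .
  moreover have "(y - w) + d + a = (c + b) - (w - x)" using ab(3) cd(3) by (simp add: algebra_simps)
  ultimately have "sle (w - x) (c + b)" using sle_iff by simp
  then have "w - x \<in> Dset" using D_her[OF p _ D_add[OF cd(1) ab(2)]] by blast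
  then have "a + (w - x) \<in> Dset" using D_add[OF ab(1)] by blast
  moreover have "w = (a + (w - x)) - b" using ab(3) by simp
  ultimately show "w \<in> Mset" using M_intro ab(2) by blast
qed

lemma M_sideal: "specific_ideal le sle Mset"
  unfolding specific_ideal_def using M_mls M_convex by blast

lemma L_eq: "left_disjoint_complement le sle A = Mset"
  unfolding left_disjoint_complement_def Dset_eq
proof
  show "\<Inter>{I. specific_ideal le sle I \<and> Dset \<subseteq> I} \<subseteq> Mset"
    using M_sideal D_M by (intro Inter_lower) blast
next
  show "Mset \<subseteq> \<Inter>{I. specific_ideal le sle I \<and> Dset \<subseteq> I}"
  proof (intro subsetI InterI)
    fix x I assume x: "x \<in> Mset" and I: "I \<in> {I. specific_ideal le sle I \<and> Dset \<subseteq> I}"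
    obtain a b where ab: "a \<in> Dset" "b \<in> Dset" "x = a - b" using x unfolding Mset_def by blast
    have sI: "subspace I" using I unfolding specific_ideal_def mixed_lattice_subspace_def by blast
    have "a \<in> I" "b \<in> I" using I ab by auto
    then have "(-1) *\<^sub>R b \<in> I" "a \<in> I" using sI unfolding subspace_def by blast+
    then have "a + (-1) *\<^sub>R b \<in> I" using sI unfolding subspace_def by blast
    then show "x \<in> I" using ab(3) by simp
  qed
qed

lemma M_regular: "regular_subspace sle Mset"
  unfolding regular_subspace_def
proof
  show "Mset \<subseteq> {x - y |x y. x \<in> Mset \<and> sle 0 x \<and> y \<in> Mset \<and> sle 0 y}"
  proof
    fix x assume "x \<in> Mset"
    then obtain a b where "a \<in> Dset" "b \<in> Dset" "x = a - b" unfolding Mset_def by blast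
    then show "x \<in> {x - y |x y. x \<in> Mset \<and> sle 0 x \<and> y \<in> Mset \<and> sle 0 y}"
      using D_M D_K by blast
  qed
  show "{x - y |x y. x \<in> Mset \<and> sle 0 x \<and> y \<in> Mset \<and> sle 0 y} \<subseteq> Mset"
    using M_diff by blast
qed

lemma M_up_sle:
  assumes C: "C \<noteq> {}" "C \<subseteq> Mset" "\<forall>a\<in>C. \<forall>b\<in>C. \<exists>c\<in>C. sle a c \<and> sle b c"
    and s: "is_least_wrt sle {u. \<forall>c\<in>C. sle c u} s"
  shows "s \<in> Mset"
proof -
  obtain c0 where c0: "c0 \<in> C" using C(1) by blast
  have ub: "\<And>c. c \<in> C \<Longrightarrow> sle c s" using s unfolding is_least_wrt_def by blast
  have least: "\<And>u. (\<forall>c\<in>C. sle c u) \<Longrightarrow> sle s u" using s unfolding is_least_wrt_def by blast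
  define t where "t = s - c0"
  have tK: "sle 0 t" using ub[OF c0] sle_iff[of c0 s] t_def by blast
  have "t \<in> Dset" unfolding Dset_def
  proof (intro CollectI conjI ballI impI)
    show "sle 0 t" by fact
    fix z assume z: "z \<in> A" "le 0 z"
    define q where "q = pi (t - z)"
    have "\<forall>c\<in>C. sle c (c0 + q)"
    proof
      fix c assume c: "c \<in> C"
      obtain c'' where c'': "c'' \<in> C" "sle c c''" "sle c0 c''" using C(3) c c0 by blast
      have "c'' - c0 \<in> Mset" using M_diff C(2) c'' c0 by blast
      moreover have "sle 0 (c'' - c0)" using c'' sle_iff[of c0 c''] by blast
      ultimately have cD: "c'' - c0 \<in> Dset" using M_K by blast
      have e: "sle 0 (s - c'')" using ub[OF c''(1)] sle_iff[of c'' s] by blast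
      have "sle (c'' - c0) (pi ((c'' - c0) + (s - c'') - z))" using G[OF cD e z] .
      moreover have "(c'' - c0) + (s - c'') - z = t - z" unfolding t_def by (simp add: algebra_simps)
      ultimately have "sle (c'' - c0) q" unfolding q_def by simp
      then have "sle c'' (c0 + q)" by (rule sle_shift[where c=c0]) (simp_all add: algebra_simps)
      then show "sle c (c0 + q)" using vpo_trans[OF sle_po c''(2)] by blast
    qed
    then have "sle s (c0 + q)" by (rule least)
    then have "sle t q" unfolding t_def by (rule sle_shift[where c="- c0"]) (simp_all add: algebra_simps)
    then have "le t q" using sle_le by blast
    moreover have "le q t" unfolding q_def using D_le_pi[OF z(2) tK] .
    ultimately show "pi (t - z) = t" unfolding q_def using vpo_antisym[OF le_po] by blast
  qed
  then have tM: "t \<in> Mset" using D_M by blast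
  have "c0 \<in> Mset" using C(2) c0 by blast
  then have "c0 + t \<in> Mset" using M_add[OF _ tM] by blast
  then show ?thesis unfolding t_def by simp
qed

lemma M_up_le:
  assumes conv: "order_convex le Mset"
    and C: "C \<noteq> {}" "C \<subseteq> Mset" "\<forall>a\<in>C. \<forall>b\<in>C. \<exists>c\<in>C. le a c \<and> le b c"
    and s: "is_least_wrt le {u. \<forall>c\<in>C. le c u} s"
  shows "s \<in> Mset"
proof -
  obtain c0 where c0: "c0 \<in> C" using C(1) by blast
  have ub: "\<And>c. c \<in> C \<Longrightarrow> le c s" using s unfolding is_least_wrt_def by blast
  have least: "\<And>u. (\<forall>c\<in>C. le c u) \<Longrightarrow> le s u" using s unfolding is_least_wrt_def by blast
  define t where "t = s - c0"
  have t0: "le 0 t" using ub[OF c0] le_iff[of c0 s] t_def by blast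
  define p where "p = pi t"
  have pK: "sle 0 p" unfolding p_def using pi_K .
  have "p \<in> Dset" unfolding Dset_def
  proof (intro CollectI conjI ballI impI)
    show "sle 0 p" by fact
    fix z assume z: "z \<in> A" "le 0 z"
    define w where "w = pi (p - z)"
    have "\<forall>c\<in>C. le c (c0 + w)"
    proof
      fix c assume c: "c \<in> C"
      obtain c'' where c'': "c'' \<in> C" "le c c''" "le c0 c''" using C(3) c c0 by blast
      have "c'' - c0 \<in> Mset" using M_diff C(2) c'' c0 by blast
      then have eD: "pi (c'' - c0) \<in> Dset" using M_pi by blast
      have "le (c'' - c0) t" unfolding t_def by (rule le_shift[OF ub[OF c''(1)], where c="- c0"]) simp_all
      then have "le (pi (c'' - c0)) p" unfolding p_def by (rule pi_mono)
      then have "le (pi (c'' - c0) - z) (p - z)" by (rule le_shift[where c="- z"]) simp_all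
      then have "le (pi (pi (c'' - c0) - z)) w" unfolding w_def by (rule pi_mono)
      then have X: "le (pi (c'' - c0)) w" using D_pi[OF eD z] by simp
      have "le (c'' - c0) w" using vpo_trans[OF le_po pi_ge[of "c'' - c0"] X] .
      then have "le c'' (c0 + w)" by (rule le_shift[where c=c0]) (simp_all add: algebra_simps)
      then show "le c (c0 + w)" using vpo_trans[OF le_po c''(2)] by blast
    qed
    then have "le s (c0 + w)" by (rule least)
    then have "le t w" unfolding t_def by (rule le_shift[where c="- c0"]) (simp_all add: algebra_simps)
    then have 1: "le p w" unfolding p_def w_def by (rule pi_least[OF pi_K])
    have 2: "le w p" unfolding w_def using D_le_pi[OF z(2) pK] .
    show "pi (p - z) = p" using vpo_antisym[OF le_po 2 1] w_def by simp
  qed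
  then have "p \<in> Mset" using D_M by blast
  moreover have "0 \<in> Mset" using D_M[OF D_zero] .
  moreover have "le t p" unfolding p_def using pi_ge .
  moreover have oc: "\<And>x y z. x \<in> Mset \<Longrightarrow> y \<in> Mset \<Longrightarrow> le x z \<Longrightarrow> le z y \<Longrightarrow> z \<in> Mset"
    using conv unfolding order_convex_def by blast
  ultimately have tM: "t \<in> Mset" using t0 by blast
  have "c0 \<in> Mset" using C(2) c0 by blast
  then have "c0 + t \<in> Mset" using M_add[OF _ tM] by blast
  then show ?thesis unfolding t_def by simp
qed

lemma main:
  "specific_band le sle (left_disjoint_complement le sle A)
         \<and> regular_subspace sle (left_disjoint_complement le sle A)
         \<and> (ideal_ml le sle (left_disjoint_complement le sle A) \<longrightarrow>
              band le sle (left_disjoint_complement le sle A)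
              \<and> regular_subspace sle (left_disjoint_complement le sle A))"
  unfolding L_eq
proof (intro conjI impI)
  have up: "\<And>C s. C \<noteq> {} \<Longrightarrow> C \<subseteq> Mset \<Longrightarrow> (\<forall>a\<in>C. \<forall>b\<in>C. \<exists>c\<in>C. sle a c \<and> sle b c) \<Longrightarrow>
            is_least_wrt sle {u. \<forall>c\<in>C. sle c u} s \<Longrightarrow> s \<in> Mset"
    by (rule M_up_sle)
  have "order_closed sle Mset" unfolding order_closed_def
  proof (intro conjI allI impI)
    fix C s assume h: "C \<noteq> {} \<and> C \<subseteq> Mset \<and> (\<forall>a\<in>C. \<forall>b\<in>C. \<exists>c\<in>C. sle a c \<and> sle b c) \<and> is_least_wrt sle {u. \<forall>c\<in>C. sle c u} s"
    then show "s \<in> Mset" by - (rule up[of C s], blast+)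
  next
    fix C s assume h: "C \<noteq> {} \<and> C \<subseteq> Mset \<and> (\<forall>a\<in>C. \<forall>b\<in>C. \<exists>c\<in>C. sle c a \<and> sle c b) \<and> is_greatest_wrt sle {l. \<forall>c\<in>C. sle l c} s"
    then show "s \<in> Mset" by - (rule vpo_down_from_up[OF sle_po M_neg up, where C=C and s=s], blast+)
  qed
  then show "specific_band le sle Mset" unfolding specific_band_def using M_sideal by blast
  show "regular_subspace sle Mset" by (rule M_regular)
  show "regular_subspace sle Mset" by (rule M_regular)
  assume id: "ideal_ml le sle Mset"
  then have conv: "order_convex le Mset" unfolding ideal_ml_def by blast
  have up2: "\<And>C s. C \<noteq> {} \<Longrightarrow> C \<subseteq> Mset \<Longrightarrow> (\<forall>a\<in>C. \<forall>b\<in>C. \<exists>c\<in>C. le a c \<and> le b c) \<Longrightarrow>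
            is_least_wrt le {u. \<forall>c\<in>C. le c u} s \<Longrightarrow> s \<in> Mset"
    by (rule M_up_le[OF conv])
  have "order_closed le Mset" unfolding order_closed_def
  proof (intro conjI allI impI)
    fix C s assume h: "C \<noteq> {} \<and> C \<subseteq> Mset \<and> (\<forall>a\<in>C. \<forall>b\<in>C. \<exists>c\<in>C. le a c \<and> le b c) \<and> is_least_wrt le {u. \<forall>c\<in>C. le c u} s"
    then show "s \<in> Mset" by - (rule up2[of C s], blast+)
  next
    fix C s assume h: "C \<noteq> {} \<and> C \<subseteq> Mset \<and> (\<forall>a\<in>C. \<forall>b\<in>C. \<exists>c\<in>C. le c a \<and> le c b) \<and> is_greatest_wrt le {l. \<forall>c\<in>C. le l c} s"
    then show "s \<in> Mset" by - (rule vpo_down_from_up[OF le_po M_neg up2, where C=C and s=s], blast+)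
  qed
  then show "band le sle Mset" unfolding band_def using id by blast
qed

end

theorem theorem5p5:
  fixes le sle :: "'a::real_vector \<Rightarrow> 'a \<Rightarrow> bool" and A :: "'a set"
  assumes "mixed_lattice_vs le sle"
    and "quasi_regular le sle"
    and "mixed_lattice_subspace le sle A"
  shows "specific_band le sle (left_disjoint_complement le sle A)
         \<and> regular_subspace sle (left_disjoint_complement le sle A)
         \<and> (ideal_ml le sle (left_disjoint_complement le sle A) \<longrightarrow>
              band le sle (left_disjoint_complement le sle A)
              \<and> regular_subspace sle (left_disjoint_complement le sle A))"
proof -
  interpret mls le sle A using assms by unfold_locales
  show ?thesis by (rule main)
qed

end
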